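(* Let $k\ge 0$, $d\ge1$. A vector $\mathfrak{c}=(c_1,\ldots,c_d)\in\mathbb{N}^d$ is the clique vector of a $k$-connected threshold graph if and only if the vector $\mathfrak{b}=(b_1,\ldots,b_d)$ defined by \[ \sum_{i=1}^d b_i x^{i-1}=\sum_{i=1}^d c_i (x-1)^{i-1} \] has positive components, $d\ge k$, and $b_1=b_2=\cdots=b_k=1$.
   Context: For a graph $G$, $S(G)$ is obtained by adding a new vertex adjacent to all vertices of $G$, and $D(G)$ by adding a new isolated vertex. A threshold graph is a graph obtainable from the graph with no vertices by a finite sequence of $S$- and $D$-operations (with the first operation applied to the empty graph being $S$). The clique vector $(c_1,\ldots,c_d)$ of a graph records the number $c_i$ of cliques with exactly $i$ vertices, $d$ being the largest size of a clique. A graph is $k$-connected if it has at least $k$ vertices and removing any set of fewer than $k$ vertices leaves a connected graph; every graph is $0$-connected. *)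

theory Defs
  imports "HOL-Computational_Algebra.Polynomial"
begin

text \<open>Finite simple graphs with vertices in nat: a vertex set V and a symmetric,
irreflexive adjacency relation E that only relates vertices of V.\<close>

definition S_op :: "nat \<Rightarrow> nat set \<Rightarrow> (nat \<Rightarrow> nat \<Rightarrow> bool) \<Rightarrow> (nat \<Rightarrow> nat \<Rightarrow> bool)" where
  "S_op v V E = (\<lambda>x y. E x y \<or> (x = v \<and> y \<in> V) \<or> (y = v \<and> x \<in> V))"

text \<open>Threshold graphs (up to relabelling of vertices): built from the empty graph by
adding a dominating vertex (S) or an isolated vertex (D).\<close>
inductive threshold_graph :: "nat set \<Rightarrow> (nat \<Rightarrow> nat \<Rightarrow> bool) \<Rightarrow> bool" where
  empty: "threshold_graph {} (\<lambda>_ _. False)"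
| S: "threshold_graph V E \<Longrightarrow> v \<notin> V \<Longrightarrow> threshold_graph (insert v V) (S_op v V E)"
| D: "threshold_graph V E \<Longrightarrow> v \<notin> V \<Longrightarrow> threshold_graph (insert v V) E"

definition is_clique :: "nat set \<Rightarrow> (nat \<Rightarrow> nat \<Rightarrow> bool) \<Rightarrow> nat set \<Rightarrow> bool" where
  "is_clique V E C \<longleftrightarrow> C \<subseteq> V \<and> (\<forall>x\<in>C. \<forall>y\<in>C. x \<noteq> y \<longrightarrow> E x y)"

definition clique_number :: "nat set \<Rightarrow> (nat \<Rightarrow> nat \<Rightarrow> bool) \<Rightarrow> nat" where
  "clique_number V E = Max (card ` {C. is_clique V E C})"

text \<open>Clique vector (c_1,...,c_d): entry i-1 of the list is the number of cliques with exactly i vertices,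
d being the largest clique size.\<close>
definition clique_vector :: "nat set \<Rightarrow> (nat \<Rightarrow> nat \<Rightarrow> bool) \<Rightarrow> nat list" where
  "clique_vector V E = map (\<lambda>i. card {C. is_clique V E C \<and> card C = i}) [1..<clique_number V E + 1]"

definition connected_on :: "nat set \<Rightarrow> (nat \<Rightarrow> nat \<Rightarrow> bool) \<Rightarrow> bool" where
  "connected_on W E \<longleftrightarrow> (\<forall>x\<in>W. \<forall>y\<in>W. (\<lambda>a b. a \<in> W \<and> b \<in> W \<and> E a b)\<^sup>*\<^sup>* x y)"

definition k_connected :: "nat \<Rightarrow> nat set \<Rightarrow> (nat \<Rightarrow> nat \<Rightarrow> bool) \<Rightarrow> bool" where
  "k_connected k V E \<longleftrightarrow> k \<le> card V \<and>
     (\<forall>X\<subseteq>V. card X < k \<longrightarrow> connected_on (V - X) E)"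

text \<open>The polynomial sum_{i=1}^d c_i (x-1)^{i-1}; its coefficients are b_1,...,b_d.\<close>
definition b_poly :: "nat list \<Rightarrow> int poly" where
  "b_poly c = (\<Sum>i<length c. smult (int (c ! i)) ([:-1, 1:] ^ i))"

end

theory Submission imports Defs begin

lemma X_pow_monom: "([:0,1:] :: int poly) ^ i = monom 1 i"
  by (induct i) (simp_all add: monom_0 monom_Suc)

lemma pcompose_power_left: "pcompose (p ^ n) q = (pcompose p q) ^ n"
  by (induct n) (simp_all add: pcompose_1 pcompose_mult)

lemma b_poly_shift: "pcompose (b_poly c) [:1,1:] = (\<Sum>i<length c. monom (int (c ! i)) i)"
proof -
  have "pcompose [:-1,1:] [:1,1:] = ([:0,1:] :: int poly)"
    by (simp add: pcompose_pCons)
  then show ?thesis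
    unfolding b_poly_def pcompose_sum pcompose_smult pcompose_power_left
    by (simp add: X_pow_monom smult_monom)
qed

lemma b_poly_coeff_shift: "i < length c \<Longrightarrow> coeff (pcompose (b_poly c) [:1,1:]) i = int (c ! i)"
  unfolding b_poly_shift coeff_sum by (simp add: sum.delta)

lemma b_poly_inj: "length c = length c' \<Longrightarrow> b_poly c = b_poly c' \<Longrightarrow> c = c'"
  by (metis b_poly_coeff_shift nth_equalityI of_nat_eq_iff)

lemma b_poly_coeff_high: "j \<ge> length c \<Longrightarrow> coeff (b_poly c) j = 0"
  unfolding b_poly_def coeff_sum
  by (intro sum.neutral) (auto intro!: coeff_eq_0 simp: degree_linear_power)


definition cnt :: "nat set \<Rightarrow> (nat \<Rightarrow> nat \<Rightarrow> bool) \<Rightarrow> nat \<Rightarrow> nat" where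
  "cnt V E i = card {C. is_clique V E C \<and> card C = i}"

definition bpN :: "nat set \<Rightarrow> (nat \<Rightarrow> nat \<Rightarrow> bool) \<Rightarrow> nat \<Rightarrow> int poly" where
  "bpN V E N = (\<Sum>i<N. smult (int (cnt V E (Suc i))) ([:-1,1:] ^ i))"

definition bp where "bp V E = bpN V E (clique_number V E)"

lemma cv_length: "length (clique_vector V E) = clique_number V E"
  by (simp add: clique_vector_def)

lemma cv_bpoly: "b_poly (clique_vector V E) = bp V E"
  unfolding b_poly_def bp_def bpN_def cv_length
  by (intro sum.cong) (auto simp: clique_vector_def cnt_def simp del: upt_Suc)

lemma tg_props: "threshold_graph V E \<Longrightarrow> finite V \<and> (\<forall>x y. E x y \<longrightarrow> x \<in> V \<and> y \<in> V)"
  by (induct rule: threshold_graph.induct) (auto simp: S_op_def)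

lemma cl_finite: "finite V \<Longrightarrow> finite {C. is_clique V E C}"
  by (rule finite_subset[of _ "Pow V"]) (auto simp: is_clique_def)

lemma clique_finite: "finite V \<Longrightarrow> is_clique V E C \<Longrightarrow> finite C"
  by (auto simp: is_clique_def intro: finite_subset)

lemma empty_clique: "is_clique V E {}"
  by (simp add: is_clique_def)

lemma om_bound: "finite V \<Longrightarrow> is_clique V E C \<Longrightarrow> card C \<le> clique_number V E"
  unfolding clique_number_def using cl_finite[of V E] by (intro Max_ge) auto

lemma om_witness: "finite V \<Longrightarrow> \<exists>C. is_clique V E C \<and> card C = clique_number V E"
proof -
  assume f: "finite V"
  have "clique_number V E \<in> card ` {C. is_clique V E C}"
    unfolding clique_number_def using cl_finite[OF f, of E] empty_clique[of V E]
    by (intro Max_in) auto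
  then show ?thesis by auto
qed

lemma om_char: "finite V \<Longrightarrow> (\<And>C. is_clique V E C \<Longrightarrow> card C \<le> n) \<Longrightarrow> is_clique V E C0 \<Longrightarrow> card C0 = n
   \<Longrightarrow> clique_number V E = n"
  by (metis le_antisym om_bound om_witness)

lemma cnt_zero: "finite V \<Longrightarrow> i > clique_number V E \<Longrightarrow> cnt V E i = 0"
  unfolding cnt_def using om_bound[of V E] by (metis (mono_tags, lifting) card_eq_0_iff empty_Collect_eq leD)

lemma cnt_0: "finite V \<Longrightarrow> cnt V E 0 = 1"
proof -
  assume f: "finite V"
  have "{C. is_clique V E C \<and> card C = 0} = {{}}"
    using clique_finite[OF f] empty_clique[of V E] by auto
  then show ?thesis by (simp add: cnt_def)
qed

lemma bpN_stable: assumes "finite V" "N \<ge> clique_number V E" shows "bpN V E N = bp V E"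
  using assms(2) proof (induct N rule: dec_induct)
  case base then show ?case by (simp add: bp_def)
next
  case (step n) then show ?case using assms(1) by (simp add: bpN_def cnt_zero)
qed


locale Sc =
  fixes V :: "nat set" and E v
  assumes fin: "finite V" and nv: "v \<notin> V" and Ein: "\<And>x y. E x y \<Longrightarrow> x \<in> V \<and> y \<in> V"
begin

lemma S_clique: "is_clique (insert v V) (S_op v V E) C \<longleftrightarrow> is_clique V E C \<or> (v \<in> C \<and> is_clique V E (C - {v}))"
  using nv Ein unfolding is_clique_def S_op_def by blast

lemma S_cnt: "cnt (insert v V) (S_op v V E) (Suc i) = cnt V E (Suc i) + cnt V E i"
proof -
  let ?A = "{C. is_clique V E C \<and> card C = Suc i}"
  let ?B = "{C. is_clique V E C \<and> card C = i}"
  have eq: "{C. is_clique (insert v V) (S_op v V E) C \<and> card C = Suc i} = ?A \<union> insert v ` ?B"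
  proof (rule set_eqI, rule iffI)
    fix C assume "C \<in> {C. is_clique (insert v V) (S_op v V E) C \<and> card C = Suc i}"
    then have c: "is_clique V E C \<or> (v \<in> C \<and> is_clique V E (C - {v}))" and cc: "card C = Suc i"
      using S_clique by auto
    show "C \<in> ?A \<union> insert v ` ?B"
    proof (cases "is_clique V E C")
      case True then show ?thesis using cc by auto
    next
      case False
      then have "v \<in> C" "is_clique V E (C - {v})" using c by auto
      moreover then have "finite C" using clique_finite[OF fin] by (metis finite_Diff2 finite.emptyI finite_insert)
      ultimately have "C - {v} \<in> ?B" "C = insert v (C - {v})" using cc by auto
      then show ?thesis by blast
    qed
  next
    fix C assume "C \<in> ?A \<union> insert v ` ?B"
    then show "C \<in> {C. is_clique (insert v V) (S_op v V E) C \<and> card C = Suc i}"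
    proof
      assume "C \<in> ?A" then show ?thesis using S_clique by auto
    next
      assume "C \<in> insert v ` ?B"
      then obtain D where D: "is_clique V E D" "card D = i" "C = insert v D" by auto
      then have "v \<notin> D" "finite D" using nv clique_finite[OF fin] by (auto simp: is_clique_def)
      then show ?thesis using D S_clique[of C] by auto
    qed
  qed
  have d: "?A \<inter> insert v ` ?B = {}"
  proof -
    have "\<forall>C\<in>?A. v \<notin> C" using nv by (auto simp: is_clique_def)
    then show ?thesis by blast
  qed
  have inj: "inj_on (insert v) ?B"
  proof (rule inj_onI)
    fix X Y assume "X \<in> ?B" "Y \<in> ?B" "insert v X = insert v Y"
    moreover have "v \<notin> X" "v \<notin> Y" using nv \<open>X \<in> ?B\<close> \<open>Y \<in> ?B\<close> by (auto simp: is_clique_def)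
    ultimately show "X = Y" by (metis insert_ident)
  qed
  have fA: "finite ?A" "finite ?B" using cl_finite[OF fin, of E] by (auto intro: finite_subset)
  show ?thesis unfolding cnt_def eq
    using card_Un_disjoint[OF fA(1) finite_imageI[OF fA(2)] d] card_image[OF inj] by simp
qed

lemma S_om: "clique_number (insert v V) (S_op v V E) = Suc (clique_number V E)"
proof -
  obtain C0 where C0: "is_clique V E C0" "card C0 = clique_number V E" using om_witness[OF fin] by blast
  have "v \<notin> C0" "finite C0" using C0 nv clique_finite[OF fin] by (auto simp: is_clique_def)
  then have w: "is_clique (insert v V) (S_op v V E) (insert v C0)" "card (insert v C0) = Suc (clique_number V E)"
    using C0 S_clique by auto
  show ?thesis
  proof (rule om_char[OF _ _ w])
    show "finite (insert v V)" using fin by simp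
    fix C assume "is_clique (insert v V) (S_op v V E) C"
    then have "is_clique V E C \<or> (v \<in> C \<and> is_clique V E (C - {v}))" using S_clique by auto
    then show "card C \<le> Suc (clique_number V E)"
    proof
      assume "is_clique V E C" then show ?thesis using om_bound[OF fin] by force
    next
      assume a: "v \<in> C \<and> is_clique V E (C - {v})"
      then have "finite C" using clique_finite[OF fin] by (metis finite_Diff2 finite.emptyI finite_insert)
      then have "card C = Suc (card (C - {v}))" using a by (metis card_Suc_Diff1)
      then show ?thesis using om_bound[OF fin, of E "C - {v}"] a by simp
    qed
  qed
qed

lemma pCons_eq: "[:-1,1:] * p + p + 1 = pCons (1::int) p"
  by (simp add: algebra_simps one_pCons)

lemma S_bp: "bp (insert v V) (S_op v V E) = pCons 1 (bp V E)"
proof -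
  let ?P = "[:-1,1:] :: int poly"
  let ?om = "clique_number V E"
  have "bp (insert v V) (S_op v V E) = (\<Sum>i<Suc ?om. smult (int (cnt V E (Suc i)) + int (cnt V E i)) (?P ^ i))"
    unfolding bp_def bpN_def S_om S_cnt by simp
  also have "\<dots> = bpN V E (Suc ?om) + (\<Sum>i<Suc ?om. smult (int (cnt V E i)) (?P ^ i))"
    by (simp add: bpN_def smult_add_left sum.distrib)
  also have "(\<Sum>i<Suc ?om. smult (int (cnt V E i)) (?P ^ i)) = 1 + ?P * bp V E"
    unfolding sum.lessThan_Suc_shift bp_def bpN_def sum_distrib_left
    by (simp add: cnt_0[OF fin] mult_smult_right)
  also have "bpN V E (Suc ?om) = bp V E" using bpN_stable[OF fin] by simp
  finally show ?thesis using pCons_eq by (simp add: algebra_simps)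
qed

end

locale Dc =
  fixes V :: "nat set" and E v
  assumes fin: "finite V" and nv: "v \<notin> V" and Ein: "\<And>x y. E x y \<Longrightarrow> x \<in> V \<and> y \<in> V"
begin

lemma D_clique: "is_clique (insert v V) E C \<longleftrightarrow> is_clique V E C \<or> C = {v}"
  using nv Ein unfolding is_clique_def by blast

lemma D_cnt: "cnt (insert v V) E i = cnt V E i + (if i = 1 then 1 else 0)"
proof -
  let ?A = "{C. is_clique V E C \<and> card C = i}"
  have eq: "{C. is_clique (insert v V) E C \<and> card C = i} = ?A \<union> (if i = 1 then {{v}} else {})"
    using D_clique by auto
  have fA: "finite ?A" using cl_finite[OF fin, of E] by (auto intro: finite_subset)
  have "{v} \<notin> ?A" using nv by (auto simp: is_clique_def)
  then show ?thesis unfolding cnt_def eq using fA by auto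
qed

lemma D_om: "clique_number (insert v V) E = max (clique_number V E) 1"
proof -
  obtain C0 where C0: "is_clique V E C0" "card C0 = clique_number V E" using om_witness[OF fin] by blast
  have w: "\<exists>C. is_clique (insert v V) E C \<and> card C = max (clique_number V E) 1"
  proof (cases "clique_number V E \<ge> 1")
    case True then show ?thesis using C0 D_clique by (intro exI[of _ C0]) auto
  next
    case False then show ?thesis using D_clique by (intro exI[of _ "{v}"]) auto
  qed
  then obtain C1 where "is_clique (insert v V) E C1" "card C1 = max (clique_number V E) 1" by blast
  then show ?thesis
  proof (intro om_char)
    show "finite (insert v V)" using fin by simp
    fix C assume "is_clique (insert v V) E C"
    then show "card C \<le> max (clique_number V E) 1" using D_clique om_bound[OF fin] by fastforce
  qed
qed

lemma D_bpN: "N \<ge> 1 \<Longrightarrow> bpN (insert v V) E N = bpN V E N + 1"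
proof (induct N rule: nat_induct_at_least)
  case base then show ?case by (simp add: bpN_def D_cnt smult_add_left one_pCons)
next
  case (Suc n) then show ?case by (simp add: bpN_def D_cnt)
qed

lemma D_bp: "bp (insert v V) E = bp V E + 1"
proof -
  have "bp (insert v V) E = bpN (insert v V) E (max (clique_number V E) 1)" by (simp add: bp_def D_om)
  also have "\<dots> = bpN V E (max (clique_number V E) 1) + 1" by (rule D_bpN) simp
  also have "bpN V E (max (clique_number V E) 1) = bp V E" by (rule bpN_stable[OF fin]) simp
  finally show ?thesis .
qed

end


lemma kc_zero: "k_connected 0 V E"
  by (simp add: k_connected_def)

lemma kc_empty: "k_connected k {} E \<longleftrightarrow> k = 0"
  by (auto simp: k_connected_def connected_on_def)

lemma om_empty: "clique_number {} E = 0"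
  using om_witness[of "{}" E] by (auto simp: is_clique_def)

lemma om_nonempty: "finite V \<Longrightarrow> u \<in> V \<Longrightarrow> clique_number V E \<ge> 1"
  using om_bound[of V E "{u}"] by (simp add: is_clique_def)

lemma bp_empty: "bp {} E = 0"
  by (simp add: bp_def bpN_def om_empty)

lemma connected_on_cong: "(\<And>a b. a \<in> W \<Longrightarrow> b \<in> W \<Longrightarrow> E a b = E' a b) \<Longrightarrow> connected_on W E = connected_on W E'"
proof -
  assume h: "\<And>a b. a \<in> W \<Longrightarrow> b \<in> W \<Longrightarrow> E a b = E' a b"
  have "(\<lambda>a b. a \<in> W \<and> b \<in> W \<and> E a b) = (\<lambda>a b. a \<in> W \<and> b \<in> W \<and> E' a b)"
    using h by (intro ext) auto
  then show ?thesis by (simp add: connected_on_def)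
qed

context Sc begin

lemma S_conn_sub: "v \<notin> W \<Longrightarrow> connected_on W (S_op v V E) = connected_on W E"
  by (rule connected_on_cong) (auto simp: S_op_def)

lemma S_conn_dom: "v \<in> W \<Longrightarrow> W \<subseteq> insert v V \<Longrightarrow> connected_on W (S_op v V E)"
  unfolding connected_on_def
proof (intro ballI)
  fix x y assume W: "v \<in> W" "W \<subseteq> insert v V" and xy: "x \<in> W" "y \<in> W"
  let ?R = "\<lambda>a b. a \<in> W \<and> b \<in> W \<and> S_op v V E a b"
  have 1: "?R\<^sup>*\<^sup>* x v"
  proof (cases "x = v")
    case False then have "?R x v" using W xy by (auto simp: S_op_def)
    then show ?thesis by auto
  qed simp
  have 2: "?R\<^sup>*\<^sup>* v y"
  proof (cases "y = v")
    case False then have "?R v y" using W xy by (auto simp: S_op_def)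
    then show ?thesis by auto
  qed simp
  show "?R\<^sup>*\<^sup>* x y" using 1 2 by simp
qed

lemma S_kc: "k_connected (Suc k) (insert v V) (S_op v V E) \<longleftrightarrow> k_connected k V E"
proof
  assume a: "k_connected (Suc k) (insert v V) (S_op v V E)"
  show "k_connected k V E"
    unfolding k_connected_def
  proof (intro conjI allI impI)
    show "k \<le> card V" using a fin nv by (simp add: k_connected_def)
    fix X assume X: "X \<subseteq> V" "card X < k"
    have "finite X" using X fin finite_subset by blast
    moreover have "v \<notin> X" using X nv by auto
    ultimately have "card (insert v X) < Suc k" using X by (simp add: card_insert_disjoint)
    moreover have "insert v X \<subseteq> insert v V" using X by auto
    ultimately have "connected_on (insert v V - insert v X) (S_op v V E)"
      using a unfolding k_connected_def by blast
    moreover have "insert v V - insert v X = V - X" using nv by auto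
    ultimately show "connected_on (V - X) E" using S_conn_sub nv by auto
  qed
next
  assume a: "k_connected k V E"
  show "k_connected (Suc k) (insert v V) (S_op v V E)"
    unfolding k_connected_def
  proof (intro conjI allI impI)
    show "Suc k \<le> card (insert v V)" using a fin nv by (simp add: k_connected_def)
    fix X assume X: "X \<subseteq> insert v V" "card X < Suc k"
    show "connected_on (insert v V - X) (S_op v V E)"
    proof (cases "v \<in> X")
      case True
      have "finite X" using X fin finite_subset by (metis finite_insert)
      moreover then have "card X > 0" using True by (auto simp: card_gt_0_iff)
      ultimately have "card (X - {v}) < k" using X True by (simp add: card_Diff_singleton)
      moreover have "X - {v} \<subseteq> V" using X by auto
      ultimately have "connected_on (V - (X - {v})) E" using a by (simp add: k_connected_def)
      moreover have "insert v V - X = V - (X - {v})" using True nv by auto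
      moreover have "v \<notin> V - (X - {v})" using nv by auto
      ultimately show ?thesis using S_conn_sub by metis
    next
      case False then show ?thesis by (intro S_conn_dom) auto
    qed
  qed
qed

end

context Dc begin

lemma D_kc: "k_connected (Suc k) (insert v V) E \<longleftrightarrow> (V = {} \<and> k = 0)"
proof
  assume a: "k_connected (Suc k) (insert v V) E"
  have k: "Suc k \<le> card (insert v V)" using a by (simp add: k_connected_def)
  have V: "V = {}"
  proof (rule ccontr)
    assume "V \<noteq> {}" then obtain u where u: "u \<in> V" by auto
    have "connected_on (insert v V) E" using a by (auto simp: k_connected_def)
    then have "(\<lambda>a b. a \<in> insert v V \<and> b \<in> insert v V \<and> E a b)\<^sup>*\<^sup>* v u" using u
      by (auto simp: connected_on_def)
    then show False
    proof (cases rule: converse_rtranclpE)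
      case base then show False using u nv by auto
    next
      case (step c) then show False using Ein nv by auto
    qed
  qed
  then show "V = {} \<and> k = 0" using k by simp
next
  assume "V = {} \<and> k = 0"
  then show "k_connected (Suc k) (insert v V) E"
    by (auto simp: k_connected_def connected_on_def)
qed

end

lemma tg_pos: "threshold_graph V E \<Longrightarrow> \<forall>j<clique_number V E. 0 < coeff (bp V E) j"
proof (induct rule: threshold_graph.induct)
  case empty then show ?case by (simp add: om_empty)
next
  case (S V E v)
  interpret Sc V E v using S tg_props by unfold_locales auto
  show ?case using S by (auto simp: S_om S_bp coeff_pCons split: nat.split)
next
  case (D V E v)
  interpret Dc V E v using D tg_props by unfold_locales auto
  show ?case
  proof (cases "clique_number V E = 0")
    case True
    then have "bp V E = 0" by (simp add: bp_def bpN_def)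
    then show ?thesis using True by (simp add: D_om D_bp)
  next
    case False then show ?thesis using D by (auto simp: D_om D_bp coeff_1 max_def)
  qed
qed

lemma all_less_Suc_pCons: "(\<forall>j<Suc k. coeff (pCons a b) j = c) \<longleftrightarrow> a = c \<and> (\<forall>j<k. coeff b j = c)"
  by (auto simp: less_Suc_eq_0_disj coeff_pCons)

lemma tg_kc: "threshold_graph V E \<Longrightarrow>
   k_connected k V E \<longleftrightarrow> (k \<le> clique_number V E \<and> (\<forall>j<k. coeff (bp V E) j = 1))"
proof (induct arbitrary: k rule: threshold_graph.induct)
  case empty then show ?case by (auto simp: kc_empty om_empty)
next
  case (S V E v)
  interpret Sc V E v using S tg_props by unfold_locales auto
  show ?case
  proof (cases k)
    case 0 then show ?thesis by (simp add: kc_zero)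
  next
    case (Suc k') then show ?thesis using S(2)[of k'] by (simp add: S_kc S_om S_bp all_less_Suc_pCons)
  qed
next
  case (D V E v)
  interpret Dc V E v using D tg_props by unfold_locales auto
  show ?case
  proof (cases k)
    case 0 then show ?thesis by (simp add: kc_zero)
  next
    case (Suc k')
    show ?thesis
    proof (cases "V = {}")
      case True then show ?thesis unfolding Suc D_kc D_om D_bp by (auto simp: om_empty bp_empty)
    next
      case False
      then obtain u where "u \<in> V" by auto
      then have "clique_number V E \<ge> 1" using om_nonempty fin by blast
      then have "coeff (bp V E) 0 > 0" using tg_pos[OF D(1)] by auto
      then have "coeff (bp V E + 1) 0 \<noteq> 1" by simp
      then show ?thesis unfolding Suc D_kc D_bp using False by auto
    qed
  qed
qed

lemma fresh: "finite (V::nat set) \<Longrightarrow> \<exists>v. v \<notin> V"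
  using ex_new_if_finite[OF infinite_UNIV_nat] by blast

lemma D_iter: "threshold_graph V E \<Longrightarrow> clique_number V E \<ge> 1 \<Longrightarrow>
  \<exists>V' E'. threshold_graph V' E' \<and> clique_number V' E' = clique_number V E \<and> bp V' E' = bp V E + of_nat m"
proof (induct m)
  case 0 then show ?case by auto
next
  case (Suc m)
  then obtain V' E' where G: "threshold_graph V' E'" "clique_number V' E' = clique_number V E"
    "bp V' E' = bp V E + of_nat m" by blast
  obtain v where v: "v \<notin> V'" using fresh tg_props[OF G(1)] by blast
  interpret Dc V' E' v using v tg_props[OF G(1)] by unfold_locales auto
  show ?case using G Suc(3) v threshold_graph.D[OF G(1) v]
    by (intro exI[of _ "insert v V'"] exI[of _ E']) (auto simp: D_om D_bp)
qed

lemma construct: "(\<forall>j<n. coeff p j > 0) \<Longrightarrow> (\<forall>j\<ge>n. coeff p j = 0) \<Longrightarrow>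
  \<exists>V E. threshold_graph V E \<and> clique_number V E = n \<and> bp V E = p"
proof (induct n arbitrary: p)
  case 0
  then have "p = 0" by (intro poly_eqI) auto
  then show ?case using threshold_graph.empty om_empty bp_empty by blast
next
  case (Suc n)
  obtain a q where p: "p = pCons a q" by (cases p)
  have "\<forall>j<n. coeff q j > 0" "\<forall>j\<ge>n. coeff q j = 0" using Suc(2,3) p by auto
  then obtain V E where G: "threshold_graph V E" "clique_number V E = n" "bp V E = q"
    using Suc(1) by blast
  obtain v where v: "v \<notin> V" using fresh tg_props[OF G(1)] by blast
  interpret Sc V E v using v tg_props[OF G(1)] by unfold_locales auto
  have G1: "threshold_graph (insert v V) (S_op v V E)" "clique_number (insert v V) (S_op v V E) = Suc n"
    "bp (insert v V) (S_op v V E) = pCons 1 q" using threshold_graph.S[OF G(1) v] G by (auto simp: S_om S_bp)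
  have a: "a > 0" using Suc(2) p by auto
  obtain V' E' where G': "threshold_graph V' E'" "clique_number V' E' = Suc n"
    "bp V' E' = pCons 1 q + of_nat (nat (a - 1))"
    using D_iter[OF G1(1), of "nat (a - 1)"] G1 by auto
  have "pCons 1 q + of_nat (nat (a - 1)) = pCons a q"
    using a by (intro poly_eqI) (auto simp: coeff_pCons of_nat_poly split: nat.split)
  then show ?case using G' p by auto
qed


theorem corollary2p3:
  fixes k d :: nat and c :: "nat list"
  assumes "d \<ge> 1" and "length c = d"
  shows "(\<exists>V E. threshold_graph V E \<and> k_connected k V E \<and> clique_vector V E = c) \<longleftrightarrow>
         ((\<forall>j<d. coeff (b_poly c) j > 0) \<and> k \<le> d \<and> (\<forall>j<k. coeff (b_poly c) j = 1))"
proof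
  assume "\<exists>V E. threshold_graph V E \<and> k_connected k V E \<and> clique_vector V E = c"
  then obtain V E where G: "threshold_graph V E" "k_connected k V E" "clique_vector V E = c" by blast
  have d: "clique_number V E = d" using G(3) assms(2) cv_length by metis
  have b: "b_poly c = bp V E" using G(3) cv_bpoly by metis
  show "(\<forall>j<d. coeff (b_poly c) j > 0) \<and> k \<le> d \<and> (\<forall>j<k. coeff (b_poly c) j = 1)"
    using tg_pos[OF G(1)] tg_kc[OF G(1)] G(2) d b by auto
next
  assume a: "(\<forall>j<d. coeff (b_poly c) j > 0) \<and> k \<le> d \<and> (\<forall>j<k. coeff (b_poly c) j = 1)"
  have "\<forall>j\<ge>d. coeff (b_poly c) j = 0" using b_poly_coeff_high assms(2) by auto
  then obtain V E where G: "threshold_graph V E" "clique_number V E = d" "bp V E = b_poly c"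
    using construct a by blast
  have "clique_vector V E = c"
    using b_poly_inj[of "clique_vector V E" c] G assms(2) cv_length cv_bpoly by metis
  moreover have "k_connected k V E" using tg_kc[OF G(1)] G a by auto
  ultimately show "\<exists>V E. threshold_graph V E \<and> k_connected k V E \<and> clique_vector V E = c"
    using G(1) by blast
qed

end
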